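(* Let $r\in\mathcal R$ be a universal proper distance matrix and let $(\mathcal U_r,\rho_r)$ be the completion of the metric space $(\mathbb N,r)$. Then for any enumeration $u_1,u_2,\dots$ of a countable everywhere dense subset of $\mathcal U_r$, the distance matrix $\{\rho_r(u_i,u_j)\}_{i,j\ge1}$ is a universal distance matrix.
   Context: $\mathcal R$ is the set of infinite real matrices $r=\{r_{i,j}\}_{i,j\ge1}$ with $r_{i,i}=0$, $r_{i,j}\ge0$, $r_{i,j}=r_{j,i}$, $r_{i,k}+r_{k,j}\ge r_{i,j}$; $r$ is proper if $r_{i,j}>0$ for $i\ne j$; $p_n(r)$ is the upper-left $n\times n$ corner. For an $n\times n$ distance matrix $q$, $A(q)=\{a\in\mathbb R^n:|a_i-a_j|\le q_{i,j}\le a_i+a_j\ \forall i,j\}$. A proper $r\in\mathcal R$ is universal if for every $n$, every $a\in A(p_n(r))$ and every $\epsilon>0$ there is $m\in\mathbb N$ with $\max_{1\le i\le n}|r_{i,m}-a_i|<\epsilon$. *)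

theory Defs
  imports "HOL-Analysis.Analysis"
begin

text \<open>Infinite matrices are indexed by nat starting at 0 (the paper starts at 1).\<close>

definition dist_matrix :: "(nat \<Rightarrow> nat \<Rightarrow> real) \<Rightarrow> bool" where
  "dist_matrix r \<longleftrightarrow> (\<forall>i. r i i = 0) \<and> (\<forall>i j. 0 \<le> r i j) \<and> (\<forall>i j. r i j = r j i)
     \<and> (\<forall>i j k. r i j \<le> r i k + r k j)"

definition proper_dm :: "(nat \<Rightarrow> nat \<Rightarrow> real) \<Rightarrow> bool" where
  "proper_dm r \<longleftrightarrow> dist_matrix r \<and> (\<forall>i j. i \<noteq> j \<longrightarrow> 0 < r i j)"

definition A_set :: "(nat \<Rightarrow> nat \<Rightarrow> real) \<Rightarrow> nat \<Rightarrow> (nat \<Rightarrow> real) set" where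
  "A_set r n = {a. \<forall>i<n. \<forall>j<n. \<bar>a i - a j\<bar> \<le> r i j \<and> r i j \<le> a i + a j}"

definition universal_dm :: "(nat \<Rightarrow> nat \<Rightarrow> real) \<Rightarrow> bool" where
  "universal_dm r \<longleftrightarrow> proper_dm r \<and>
     (\<forall>n. \<forall>a\<in>A_set r n. \<forall>\<epsilon>>0. \<exists>m. \<forall>i<n. \<bar>r i m - a i\<bar> < \<epsilon>)"

end

theory Submission
  imports Defs
begin

lemma katetov_min:
  fixes u :: "nat \<Rightarrow> 'a::metric_space" and a :: "nat \<Rightarrow> real"
  assumes n: "0 < n"
    and f_def: "f = (\<lambda>z. Min ((\<lambda>i. a i + dist (u i) z) ` {..<n}))"
  shows "\<And>i z. i < n \<Longrightarrow> f z \<le> a i + dist (u i) z"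
    and "\<And>z. \<exists>i<n. f z = a i + dist (u i) z"
proof -
  fix i z assume "i < n"
  then show "f z \<le> a i + dist (u i) z" unfolding f_def by (intro Min_le) auto
next
  fix z
  have "f z \<in> (\<lambda>i. a i + dist (u i) z) ` {..<n}" unfolding f_def
    using n by (intro Min_in) auto
  then show "\<exists>i<n. f z = a i + dist (u i) z" by auto
qed

theorem lemma6:
  fixes r :: "nat \<Rightarrow> nat \<Rightarrow> real"
    and e :: "nat \<Rightarrow> 'a::complete_space"
    and u :: "nat \<Rightarrow> 'a"
  assumes "universal_dm r"
    and "\<forall>i j. dist (e i) (e j) = r i j"
    and "closure (range e) = UNIV"
    and "inj u"
    and "closure (range u) = UNIV"
  shows "universal_dm (\<lambda>i j. dist (u i) (u j))"
proof -
  have dense_e: "\<exists>k. dist (e k) x < d" if dpos: "d > 0" for x d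
  proof -
    have "x \<in> closure (range e)" using assms(3) by simp
    then obtain y where "y \<in> range e" "dist y x < d" using dpos closure_approachable by metis
    then show ?thesis by auto
  qed
  have dense_u: "\<exists>k. dist (u k) x < d" if dpos: "d > 0" for x d
  proof -
    have "x \<in> closure (range u)" using assms(5) by simp
    then obtain y where "y \<in> range u" "dist y x < d" using dpos closure_approachable by metis
    then show ?thesis by auto
  qed
  have univ: "\<forall>N. \<forall>b\<in>A_set r N. \<forall>\<epsilon>>0. \<exists>m. \<forall>i<N. \<bar>r i m - b i\<bar> < \<epsilon>"
    using assms(1) unfolding universal_dm_def by blast
  have prp: "proper_dm (\<lambda>i j. dist (u i) (u j))"
    unfolding proper_dm_def dist_matrix_def
    using assms(4) by (auto simp: dist_commute dist_triangle2 inj_eq)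
  have main: "\<exists>m. \<forall>i<n. \<bar>dist (u i) (u m) - a i\<bar> < \<epsilon>"
    if aA: "a \<in> A_set (\<lambda>i j. dist (u i) (u j)) n" and eps: "\<epsilon> > 0" for n a \<epsilon>
  proof (cases "n = 0")
    case True then show ?thesis by auto
  next
    case False
    then have n: "0 < n" by simp
    define f where "f = (\<lambda>z. Min ((\<lambda>i. a i + dist (u i) z) ` {..<n}))"
    note K = katetov_min[OF n f_def]
    have adm: "\<bar>a i - a j\<bar> \<le> dist (u i) (u j) \<and> dist (u i) (u j) \<le> a i + a j"
      if "i < n" "j < n" for i j using aA that unfolding A_set_def by auto
    have lip: "\<bar>f z - f w\<bar> \<le> dist z w" for z w
    proof -
      obtain i where i: "i < n" "f w = a i + dist (u i) w" using K(2)[of w] by blast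
      obtain j where j: "j < n" "f z = a j + dist (u j) z" using K(2)[of z] by blast
      have "f z \<le> a i + dist (u i) z" using K(1)[OF i(1)] by blast
      moreover have "f w \<le> a j + dist (u j) w" using K(1)[OF j(1)] by blast
      moreover have "dist (u i) z \<le> dist (u i) w + dist z w"
        using dist_triangle[of "u i" z w] by (simp add: dist_commute)
      moreover have "dist (u j) w \<le> dist (u j) z + dist z w"
        using dist_triangle[of "u j" w z] by (simp add: dist_commute)
      ultimately show ?thesis using i j by linarith
    qed
    have sumge: "dist z w \<le> f z + f w" for z w
    proof -
      obtain i where i: "i < n" "f w = a i + dist (u i) w" using K(2)[of w] by blast
      obtain j where j: "j < n" "f z = a j + dist (u j) z" using K(2)[of z] by blast
      have "dist (u j) (u i) \<le> a j + a i" using adm i j by blast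
      moreover have "dist z w \<le> dist z (u j) + dist (u j) (u i) + dist (u i) w"
        using dist_triangle[of z "u i" "u j"] dist_triangle[of z w "u i"] by linarith
      ultimately show ?thesis using i j by (simp add: dist_commute)
    qed
    have fu: "f (u i) = a i" if "i < n" for i
    proof -
      obtain j where j: "j < n" "f (u i) = a j + dist (u j) (u i)" using K(2)[of "u i"] by blast
      have "a i \<le> a j + dist (u j) (u i)" using adm[OF that j(1)] by (simp add: dist_commute abs_le_iff)
      moreover have "f (u i) \<le> a i" using K(1)[OF that, of "u i"] by simp
      ultimately show ?thesis using j by linarith
    qed
    define d where "d = \<epsilon> / 4"
    have d: "d > 0" using eps d_def by simp
    have "\<forall>i. \<exists>k. dist (e k) (u i) < d" using dense_e d by blast
    then obtain k where k: "\<And>i. dist (e (k i)) (u i) < d" by metis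
    define N where "N = Suc (Max (k ` {..<n}))"
    have kN: "k i < N" if "i < n" for i
      unfolding N_def using that by (simp add: le_imp_less_Suc)
    have bA: "(\<lambda>l. f (e l)) \<in> A_set r N"
    proof -
      have "\<bar>f (e i) - f (e j)\<bar> \<le> r i j \<and> r i j \<le> f (e i) + f (e j)" for i j
        using lip[of "e i" "e j"] sumge[of "e i" "e j"] assms(2) by simp
      then show ?thesis unfolding A_set_def by blast
    qed
    obtain m where m: "\<And>l. l < N \<Longrightarrow> \<bar>r l m - f (e l)\<bar> < d"
    proof -
      have "\<forall>b\<in>A_set r N. \<forall>\<epsilon>>0. \<exists>m. \<forall>i<N. \<bar>r i m - b i\<bar> < \<epsilon>" using univ by (rule spec)
      from this[rule_format, OF bA d] obtain m0 where "\<forall>i<N. \<bar>r i m0 - f (e i)\<bar> < d" by blast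
      then show ?thesis using that by blast
    qed
    obtain m' where m': "dist (u m') (e m) < d" using dense_u d by blast
    have "\<bar>dist (u i) (u m') - a i\<bar> < \<epsilon>" if i: "i < n" for i
    proof -
      have 1: "\<bar>r (k i) m - f (e (k i))\<bar> < d" using m kN i by blast
      have 2: "\<bar>f (e (k i)) - f (u i)\<bar> < d" using lip[of "e (k i)" "u i"] k[of i] by linarith
      have 3: "\<bar>dist (u i) (e m) - dist (e (k i)) (e m)\<bar> < d"
      proof -
        have "dist (u i) (e m) \<le> dist (u i) (e (k i)) + dist (e (k i)) (e m)" by (rule dist_triangle)
        moreover have "dist (e (k i)) (e m) \<le> dist (e (k i)) (u i) + dist (u i) (e m)" by (rule dist_triangle)
        moreover have "dist (u i) (e (k i)) = dist (e (k i)) (u i)" by (rule dist_commute)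
        ultimately show ?thesis using k[of i] by linarith
      qed
      have 4: "\<bar>dist (u i) (u m') - dist (u i) (e m)\<bar> < d"
      proof -
        have "dist (u i) (u m') \<le> dist (u i) (e m) + dist (e m) (u m')" by (rule dist_triangle)
        moreover have "dist (u i) (e m) \<le> dist (u i) (u m') + dist (u m') (e m)" by (rule dist_triangle)
        moreover have "dist (u m') (e m) = dist (e m) (u m')" by (rule dist_commute)
        ultimately show ?thesis using m' by linarith
      qed
      have "r (k i) m = dist (e (k i)) (e m)" using assms(2) by simp
      then show ?thesis using 1 2 3 4 fu[OF i] d_def by linarith
    qed
    then show ?thesis by blast
  qed
  show ?thesis unfolding universal_dm_def using prp main by blast
qed

end
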